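(* Let $G = K \rtimes_\varphi \langle t\rangle$ be a finitely generated group, where $K$ is abelian, $\langle t\rangle$ is infinite cyclic and $\varphi\in\mathrm{Aut}(K)$. Let $R$ be a finite symmetric subset of $K$ such that $S=R\cup\{t^{\pm1}\}$ generates $G$. Let $g\in G$ be a minimal length conjugacy representative. (i) If the $t$-exponent sum of $g$ is $0$, then there is $w\in\mathcal C_0$ such that $g$ is represented by some cyclic permutation of $w$. (ii) If the $t$-exponent sum of $g$ is $m>0$, then there is $w\in\mathcal C_m$ such that $g$ is represented by some cyclic permutation of $w$.
   Context: $K$ is written additively; $(x,t^m)$ has $t$-exponent sum $m$; $tkt^{-1}=\varphi(k)$. An element $g$ is a minimal length conjugacy representative if its word length (w.r.t. $S$) is minimal among all its conjugates. $W(R)$ is the set of words in $R$; a word is a geodesic if its freely reduced length equals the word length of the element it represents. $W'$ is the set of geodesic words of the form $t^{-p}u_0\,t\,u_1\,t\cdots u_{d-1}\,t\,u_d\,t^{-q}t^{m}$ with $p,q,m\ge0$, $d=p+q$, $u_i\in W(R)$. $\mathcal C_0=\{u_0tu_1t\cdots u_{d-1}tu_dt^{-d}\in W' : d\ge0,\ u_i\in W(R)\}$ and, for $m>0$, $\mathcal C_m=\{u_0tu_1t\cdots u_{m-1}t\in W' : u_i\in W(R)\}$. A cyclic permutation of a word $s_1\cdots s_\ell$ is a word $s_{j+1}\cdots s_\ell s_1\cdots s_j$. *)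

theory Defs
  imports Main
begin

text \<open>An element (x, m) stands for x t^m, with
t k t^-1 = phi k, so (x,m)(y,n) = (x + phi^m y, m + n).\<close>

definition phipow :: "('k \<Rightarrow> 'k) \<Rightarrow> int \<Rightarrow> 'k \<Rightarrow> 'k" where
  "phipow phi m = (if 0 \<le> m then phi ^^ nat m else (inv phi) ^^ nat (- m))"

definition gmul :: "('k::ab_group_add \<Rightarrow> 'k) \<Rightarrow> 'k \<times> int \<Rightarrow> 'k \<times> int \<Rightarrow> 'k \<times> int" where
  "gmul phi a b = (fst a + phipow phi (snd a) (fst b), snd a + snd b)"

definition ginv :: "('k::ab_group_add \<Rightarrow> 'k) \<Rightarrow> 'k \<times> int \<Rightarrow> 'k \<times> int" where
  "ginv phi a = (- phipow phi (- snd a) (fst a), - snd a)"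

definition is_aut :: "('k::ab_group_add \<Rightarrow> 'k) \<Rightarrow> bool" where
  "is_aut phi \<longleftrightarrow> bij phi \<and> (\<forall>x y. phi (x + y) = phi x + phi y)"

datatype 'k letter = Rg 'k | T | Ti

definition Sset :: "'k set \<Rightarrow> 'k letter set" where
  "Sset R = Rg ` R \<union> {T, Ti}"

fun letter_val :: "'k::ab_group_add letter \<Rightarrow> 'k \<times> int" where
  "letter_val (Rg r) = (r, 0)"
| "letter_val T = (0, 1)"
| "letter_val Ti = (0, -1)"

fun evalw :: "('k::ab_group_add \<Rightarrow> 'k) \<Rightarrow> 'k letter list \<Rightarrow> 'k \<times> int" where
  "evalw phi [] = (0, 0)"
| "evalw phi (a # w) = gmul phi (letter_val a) (evalw phi w)"

definition wordlen :: "('k::ab_group_add \<Rightarrow> 'k) \<Rightarrow> 'k set \<Rightarrow> 'k \<times> int \<Rightarrow> nat" where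
  "wordlen phi R g = (LEAST n. \<exists>w. set w \<subseteq> Sset R \<and> length w = n \<and> evalw phi w = g)"

definition geodesic :: "('k::ab_group_add \<Rightarrow> 'k) \<Rightarrow> 'k set \<Rightarrow> 'k letter list \<Rightarrow> bool" where
  "geodesic phi R w \<longleftrightarrow> set w \<subseteq> Sset R \<and> length w = wordlen phi R (evalw phi w)"

definition min_conj_rep :: "('k::ab_group_add \<Rightarrow> 'k) \<Rightarrow> 'k set \<Rightarrow> 'k \<times> int \<Rightarrow> bool" where
  "min_conj_rep phi R g \<longleftrightarrow>
     (\<forall>h. wordlen phi R g \<le> wordlen phi R (gmul phi (gmul phi h g) (ginv phi h)))"

definition WR :: "'k set \<Rightarrow> 'k letter list set" where
  "WR R = {u. set u \<subseteq> Rg ` R}"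

fun joinT :: "'k letter list list \<Rightarrow> 'k letter list" where
  "joinT [] = []"
| "joinT [u] = u"
| "joinT (u # us) = u @ [T] @ joinT us"

definition tpow :: "int \<Rightarrow> 'k letter list" where
  "tpow k = (if 0 \<le> k then replicate (nat k) T else replicate (nat (- k)) Ti)"

definition Wprime :: "('k::ab_group_add \<Rightarrow> 'k) \<Rightarrow> 'k set \<Rightarrow> 'k letter list set" where
  "Wprime phi R = {w. geodesic phi R w \<and>
     (\<exists>p q m us. length us = p + q + 1 \<and> (\<forall>u\<in>set us. u \<in> WR R) \<and>
        w = replicate p Ti @ joinT us @ tpow (int m - int q))}"

definition C0 :: "('k::ab_group_add \<Rightarrow> 'k) \<Rightarrow> 'k set \<Rightarrow> 'k letter list set" where
  "C0 phi R = {w \<in> Wprime phi R. \<exists>d us. length us = d + 1 \<and> (\<forall>u\<in>set us. u \<in> WR R) \<and>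
        w = joinT us @ replicate d Ti}"

definition Cm :: "('k::ab_group_add \<Rightarrow> 'k) \<Rightarrow> 'k set \<Rightarrow> nat \<Rightarrow> 'k letter list set" where
  "Cm phi R m = {w \<in> Wprime phi R. \<exists>us. length us = m \<and> (\<forall>u\<in>set us. u \<in> WR R) \<and>
        w = concat (map (\<lambda>u. u @ [T]) us)}"

end

theory Submission imports Defs begin

lemma funpow_add_hom: fixes f :: "'a::ab_group_add \<Rightarrow> 'a" assumes h: "\<And>x y. f (x + y) = f x + f y" shows "(f ^^ n) (x + y) = (f ^^ n) x + (f ^^ n) y"
  by (induction n) (simp_all add: h)

locale autm = fixes phi :: "'k::ab_group_add \<Rightarrow> 'k" assumes aut: "is_aut phi"
begin

lemma bijp: "bij phi" using aut unfolding is_aut_def by blast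
lemma addp: "phi (x + y) = phi x + phi y" using aut unfolding is_aut_def by blast
lemma pinv1[simp]: "phi (inv phi z) = z" using bijp by (simp add: bij_is_surj surj_f_inv_f)
lemma pinv2[simp]: "inv phi (phi z) = z" using bijp by (simp add: bij_is_inj)
lemma addi: "inv phi (x + y) = inv phi x + inv phi y"
proof -
  have "phi (inv phi x + inv phi y) = x + y" by (simp add: addp)
  then show ?thesis by (metis pinv2)
qed

lemma pp_add: "phipow phi a (x + y) = phipow phi a x + phipow phi a y"
  unfolding phipow_def using funpow_add_hom[of phi] funpow_add_hom[of "inv phi"] addp addi by auto

lemma pp_0: "phipow phi a 0 = 0"
  using pp_add[of a 0 0] by simp

lemma pp_neg: "phipow phi a (- x) = - phipow phi a x"
proof -
  have "phipow phi a x + phipow phi a (- x) = 0" using pp_add[of a x "-x"] pp_0[of a] by simp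
  then show ?thesis by (simp add: add_eq_0_iff)
qed

lemma pp_diff: "phipow phi a (x - y) = phipow phi a x - phipow phi a y"
  using pp_add[of a x "-y"] pp_neg by simp

lemma pp_zero[simp]: "phipow phi 0 x = x" unfolding phipow_def by simp

lemma pp_suc: "phipow phi (a + 1) y = phi (phipow phi a y)"
proof (cases "0 \<le> a")
  case True
  then have "nat (a+1) = Suc (nat a)" by simp
  then show ?thesis using True unfolding phipow_def by simp
next
  case False
  show ?thesis
  proof (cases "a = -1")
    case True then show ?thesis unfolding phipow_def by simp
  next
    case F2: False
    define k where "k = nat (- a) - 2"
    have "nat (- (a+1)) = Suc k" "nat (-a) = Suc (Suc k)" using False F2 unfolding k_def by auto
    moreover have "\<not> 0 \<le> a + 1" using False F2 by simp
    ultimately show ?thesis using False unfolding phipow_def by simp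
  qed
qed

lemma pp_pred: "phipow phi (a - 1) y = inv phi (phipow phi a y)"
proof -
  have "phipow phi a y = phi (phipow phi (a - 1) y)" using pp_suc[of "a - 1" y] by simp
  then show ?thesis by simp
qed

lemma pp_comp: "phipow phi b (phipow phi a y) = phipow phi (a + b) y"
proof (induction b rule: int_induct[where k=0])
  case base then show ?case by simp
next
  case (step1 i)
  then show ?case using pp_suc[of i] pp_suc[of "a+i"] by (simp add: add.assoc)
next
  case (step2 i)
  then show ?case using pp_pred[of i] pp_pred[of "a+i"] by (simp add: algebra_simps)
qed

lemma pp_inv1[simp]: "phipow phi a (phipow phi (- a) y) = y" using pp_comp[of a "-a" y] by simp
lemma pp_inv2[simp]: "phipow phi (- a) (phipow phi a y) = y" using pp_comp[of "-a" a y] by simp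


lemma gmul_assoc: "gmul phi p (gmul phi q r) = gmul phi (gmul phi p q) r"
  by (simp add: gmul_def pp_add pp_comp add.assoc add.commute)

lemma eval_append: "evalw phi (a @ b) = gmul phi (evalw phi a) (evalw phi b)"
proof (induction a)
  case Nil then show ?case by (simp add: gmul_def pp_0)
next
  case (Cons x a) then show ?case by (simp add: gmul_assoc)
qed

lemma conj_formula: "gmul phi (gmul phi h (x, m)) (ginv phi h) = (fst h + phipow phi (snd h) x - phipow phi m (fst h), m)"
  by (simp add: gmul_def ginv_def pp_add pp_neg pp_comp add.commute)

lemma swap0: "snd a + snd b = 0 \<Longrightarrow> gmul phi b a = (phipow phi (snd b) (fst (gmul phi a b)), 0)"
  by (simp add: gmul_def pp_add pp_comp add.commute)

lemma swap_conj: "gmul phi a b = gmul phi (gmul phi a (gmul phi b a)) (ginv phi a)"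
  by (simp add: gmul_def ginv_def pp_add pp_neg pp_comp algebra_simps)

end

fun lh :: "'k letter \<Rightarrow> int" where
  "lh (Rg r) = 0" | "lh T = 1" | "lh Ti = -1"

definition hgt :: "'k letter list \<Rightarrow> int" where "hgt w = sum_list (map lh w)"
definition ups :: "'k letter list \<Rightarrow> nat" where "ups w = length (filter (\<lambda>a. a = T) w)"
definition downs :: "'k letter list \<Rightarrow> nat" where "downs w = length (filter (\<lambda>a. a = Ti) w)"

fun rl :: "int \<Rightarrow> 'k letter list \<Rightarrow> (int \<times> 'k) list" where
  "rl c [] = []"
| "rl c (Rg r # w) = (c, r) # rl c w"
| "rl c (T # w) = rl (c + 1) w"
| "rl c (Ti # w) = rl (c - 1) w"

lemma hgt_simps[simp]: "hgt [] = 0" "hgt (a # w) = lh a + hgt w" "hgt (u @ v) = hgt u + hgt v"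
  by (auto simp: hgt_def)
lemma ups_simps[simp]: "ups [] = 0" "ups (u @ v) = ups u + ups v" "ups (T # w) = Suc (ups w)"
  "ups (Ti # w) = ups w" "ups (Rg r # w) = ups w"
  by (auto simp: ups_def)
lemma downs_simps[simp]: "downs [] = 0" "downs (u @ v) = downs u + downs v" "downs (T # w) = downs w"
  "downs (Ti # w) = Suc (downs w)" "downs (Rg r # w) = downs w"
  by (auto simp: downs_def)

lemma hgt_ud: "hgt w = int (ups w) - int (downs w)"
proof (induction w)
  case (Cons a w) then show ?case by (cases a) auto
qed simp

lemma len_rl: "length w = length (rl c w) + ups w + downs w"
  by (induction c w rule: rl.induct) auto

lemma rl_append: "rl c (a @ b) = rl c a @ rl (c + hgt a) b"
  by (induction c a rule: rl.induct) (auto simp: algebra_simps)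

lemma rl_mem: "(h, r) \<in> set (rl c w) \<Longrightarrow> (\<exists>i \<le> length w. h = c + hgt (take i w)) \<and> Rg r \<in> set w"
proof (induction c w rule: rl.induct)
  case (2 c r' w)
  then show ?case
  proof (cases "(h, r) = (c, r')")
    case True then show ?thesis by (rule_tac conjI, rule_tac x=0 in exI) auto
  next
    case False
    then have "(h, r) \<in> set (rl c w)" using 2 by auto
    then obtain i where "i \<le> length w" "h = c + hgt (take i w)" "Rg r \<in> set w" using 2 by blast
    then show ?thesis by (rule_tac conjI, rule_tac x="Suc i" in exI) auto
  qed
next
  case (3 c w)
  then obtain i where "i \<le> length w" "h = c + 1 + hgt (take i w)" "Rg r \<in> set w" by auto
  then show ?case by (rule_tac conjI, rule_tac x="Suc i" in exI) auto
next
  case (4 c w)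
  then obtain i where "i \<le> length w" "h = c - 1 + hgt (take i w)" "Rg r \<in> set w" by auto
  then show ?case by (rule_tac conjI, rule_tac x="Suc i" in exI) auto
qed simp

lemma rl_rep: "rl c (replicate d Ti) = []"
  by (induction d arbitrary: c) auto

lemma rl_map: "rl c (map Rg u) = map (\<lambda>r. (c, r)) u"
  by (induction u) auto

lemma hgt_map[simp]: "hgt (map Rg u) = 0" by (induction u) auto
lemma ups_map[simp]: "ups (map Rg u) = 0" by (induction u) auto
lemma downs_map[simp]: "downs (map Rg u) = 0" by (induction u) auto
lemma hgt_rep[simp]: "hgt (replicate d Ti) = - int d" by (induction d) auto

lemma conc: "rl c (concat (map (\<lambda>j. map Rg (u j) @ [T]) [0..<k])) = concat (map (\<lambda>j. map (\<lambda>r. (c + int j, r)) (u j)) [0..<k])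
   \<and> hgt (concat (map (\<lambda>j. map Rg (u j) @ [T]) [0..<k])) = int k
   \<and> length (concat (map (\<lambda>j. map Rg (u j) @ [T]) [0..<k])) = sum_list (map (\<lambda>j. length (u j)) [0..<k]) + k"
  by (induction k) (auto simp: rl_append rl_map)

lemma regroup:
  assumes "\<forall>p\<in>set L. key p \<in> S" "finite S"
  shows "sum_list (map F L) = (\<Sum>v\<in>S. sum_list (map F (filter (\<lambda>p. key p = v) L)))"
  using assms(1)
proof (induction L)
  case Nil then show ?case by simp
next
  case (Cons p L)
  have "(\<Sum>v\<in>S. sum_list (map F (filter (\<lambda>q. key q = v) (p # L))))
      = (\<Sum>v\<in>S. (if key p = v then F p else 0) + sum_list (map F (filter (\<lambda>q. key q = v) L)))"
    by (rule sum.cong) auto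
  also have "\<dots> = F p + (\<Sum>v\<in>S. sum_list (map F (filter (\<lambda>q. key q = v) L)))"
    using Cons.prems assms(2) by (simp add: sum.distrib)
  finally show ?case using Cons by simp
qed


context autm begin

lemma hgt_eval: "snd (evalw phi w) = hgt w"
proof (induction w)
  case (Cons a w) then show ?case by (cases a) (auto simp: gmul_def)
qed simp

lemma eval_rl: "phipow phi c (fst (evalw phi w)) = sum_list (map (\<lambda>(h,r). phipow phi h r) (rl c w))"
proof (induction c w rule: rl.induct)
  case (1 c) then show ?case by (simp add: pp_0)
next
  case (2 c r w) then show ?case by (simp add: gmul_def pp_add)
next
  case (3 c w) then show ?case by (simp add: gmul_def pp_add pp_0 pp_comp add.commute)
next
  case (4 c w) then show ?case by (simp add: gmul_def pp_add pp_0 pp_comp add.commute)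
qed

lemma eval_x: "fst (evalw phi w) = sum_list (map (\<lambda>p. phipow phi (fst p) (snd p)) (rl 0 w))"
  using eval_rl[of 0 w] by (simp add: split_def)

end

lemma wl_le: "set w \<subseteq> Sset R \<Longrightarrow> wordlen phi R (evalw phi w) \<le> length w"
  unfolding wordlen_def by (rule Least_le) auto

lemma wl_ex: "\<forall>h. \<exists>w. set w \<subseteq> Sset R \<and> evalw phi w = h \<Longrightarrow>
   \<exists>w. set w \<subseteq> Sset R \<and> length w = wordlen phi R g \<and> evalw phi w = g"
  unfolding wordlen_def by (rule LeastI_ex) blast

lemma geod_of:
  assumes "min_conj_rep phi R g" "length w \<le> wordlen phi R g" "set w \<subseteq> Sset R"
    "evalw phi w = gmul phi (gmul phi h g) (ginv phi h)"
  shows "geodesic phi R w \<and> length w = wordlen phi R g"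
proof -
  have "wordlen phi R g \<le> wordlen phi R (evalw phi w)" using assms(1,4) unfolding min_conj_rep_def by metis
  moreover have "wordlen phi R (evalw phi w) \<le> length w" using wl_le assms(3) .
  ultimately show ?thesis using assms(2,3) unfolding geodesic_def by simp
qed

lemma joinT_T: "us \<noteq> [] \<Longrightarrow> joinT us @ [T] = concat (map (\<lambda>u. u @ [T]) us)"
  by (induction us rule: joinT.induct) auto

lemma joinT_snoc: "joinT (xs @ [y]) = (if xs = [] then y else joinT xs @ [T] @ y)"
  by (induction xs rule: joinT.induct) auto

lemma joinT_upt: "joinT (map G [0..<Suc d]) = concat (map (\<lambda>j. G j @ [T]) [0..<d]) @ G d"
proof (induction d)
  case 0 then show ?case by simp
next
  case (Suc d)
  have "joinT (map G [0..<Suc (Suc d)]) = joinT (map G [0..<Suc d] @ [G (Suc d)])" by simp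
  also have "\<dots> = joinT (map G [0..<Suc d]) @ [T] @ G (Suc d)" by (subst joinT_snoc) simp
  finally show ?case using Suc by simp
qed

lemma decomp: "set w \<subseteq> Rg ` R \<union> {T} \<Longrightarrow> \<exists>us v. length us = ups w \<and> (\<forall>u\<in>set us. u \<in> WR R) \<and> v \<in> WR R
   \<and> w = concat (map (\<lambda>u. u @ [T]) us) @ v"
proof (induction w)
  case Nil then show ?case by (rule_tac x="[]" in exI, rule_tac x="[]" in exI) (simp add: WR_def)
next
  case (Cons a w)
  then obtain us v where h: "length us = ups w" "\<forall>u\<in>set us. u \<in> WR R" "v \<in> WR R"
   "w = concat (map (\<lambda>u. u @ [T]) us) @ v" by auto
  show ?case
  proof (cases "a = T")
    case True then show ?thesis using h by (rule_tac x="[] # us" in exI, rule_tac x=v in exI) (auto simp: WR_def)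
  next
    case False
    then obtain r where r: "a = Rg r" "r \<in> R" using Cons.prems by auto
    show ?thesis
    proof (cases us)
      case Nil then show ?thesis using h r by (rule_tac x="[]" in exI, rule_tac x="a # v" in exI) (auto simp: WR_def)
    next
      case (Cons u us')
      then show ?thesis using h r by (rule_tac x="(a # u) # us'" in exI, rule_tac x="v" in exI) (auto simp: WR_def)
    qed
  qed
qed


lemma sl_concat: "sum_list (map f (concat xs)) = sum_list (map (\<lambda>x. sum_list (map f x)) xs)"
  by (induction xs) auto

lemma sl_one: "sum_list (map (\<lambda>_. 1::nat) xs) = length xs"
  by (induction xs) auto

context autm begin

lemma shiftD_aux: "\<exists>k. phipow phi b r - phipow phi (b + q * int m) r = k - phipow phi (int m) k"
proof (induction q rule: int_induct[where k=0])
  case base then show ?case by (rule_tac x=0 in exI) (simp add: pp_0)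
next
  case (step1 i)
  then obtain k where k: "phipow phi b r - phipow phi (b + i * int m) r = k - phipow phi (int m) k" by blast
  define y where "y = phipow phi (b + i * int m) r"
  have e: "phipow phi (b + (i + 1) * int m) r = phipow phi (int m) y"
    unfolding y_def by (simp add: pp_comp algebra_simps)
  show ?case using k e unfolding y_def[symmetric]
    by (rule_tac x="k + y" in exI) (simp add: pp_add algebra_simps)
next
  case (step2 i)
  then obtain k where k: "phipow phi b r - phipow phi (b + i * int m) r = k - phipow phi (int m) k" by blast
  define y where "y = phipow phi (b + (i - 1) * int m) r"
  have e: "phipow phi (b + i * int m) r = phipow phi (int m) y"
    unfolding y_def by (simp add: pp_comp algebra_simps)
  show ?case using k e unfolding y_def[symmetric]
    by (rule_tac x="k - y" in exI) (simp add: pp_diff algebra_simps)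
qed

lemma shiftD: "\<exists>k. phipow phi (h mod int m) r - phipow phi h r = k - phipow phi (int m) k"
  using shiftD_aux[of "h mod int m" r "h div int m" m] by (simp add: mod_div_mult_eq)

lemma partii:
  assumes gen: "\<forall>h. \<exists>w. set w \<subseteq> Sset R \<and> evalw phi w = h" and mc: "min_conj_rep phi R g"
    and m: "m > 0" "snd g = int m"
  shows "\<exists>w\<in>Cm phi R m. \<exists>j. evalw phi (rotate j w) = g"
proof -
  obtain w0 where w0: "set w0 \<subseteq> Sset R" "length w0 = wordlen phi R g" "evalw phi w0 = g"
    using wl_ex[OF gen] by blast
  define L where "L = rl 0 w0"
  define F where "F = (\<lambda>p::int\<times>'k. phipow phi (fst p) (snd p))"
  define key where "key = (\<lambda>p::int\<times>'k. nat (fst p mod int m))"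
  define F' where "F' = (\<lambda>p::int\<times>'k. phipow phi (int (key p)) (snd p))"
  define u where "u = (\<lambda>j. map snd (filter (\<lambda>p. key p = j) L))"
  define w' where "w' = concat (map (\<lambda>j. map Rg (u j) @ [T]) [0..<m])"
  have LR: "\<forall>p\<in>set L. snd p \<in> R"
  proof
    fix p assume "p \<in> set L"
    then have "Rg (snd p) \<in> set w0" using rl_mem[of "fst p" "snd p" 0 w0] unfolding L_def by auto
    then show "snd p \<in> R" using w0(1) unfolding Sset_def by auto
  qed
  have x: "fst g = sum_list (map F L)" using eval_x[of w0] w0(3) unfolding L_def F_def
    by simp
  have keyS: "\<forall>p\<in>set L. key p \<in> {0..<m}" using m(1) unfolding key_def by (auto simp: nat_less_iff)
  note cw = conc[of 0 u m]
  have rlw: "rl 0 w' = concat (map (\<lambda>j. map (\<lambda>r. (int j, r)) (u j)) [0..<m])" using cw unfolding w'_def by simp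
  have fu: "map F' (filter (\<lambda>p. key p = j) L) = map (\<lambda>r. phipow phi (int j) r) (u j)" for j
    unfolding u_def F'_def by (induction L) auto
  have x': "fst (evalw phi w') = sum_list (map F' L)"
  proof -
    have "fst (evalw phi w') = sum_list (map F (rl 0 w'))" using eval_x[of w'] unfolding F_def
      by simp
    also have "\<dots> = sum_list (map (\<lambda>j. sum_list (map (\<lambda>r. phipow phi (int j) r) (u j))) [0..<m])"
      unfolding rlw sl_concat by (simp add: F_def o_def)
    also have "\<dots> = (\<Sum>j\<in>{0..<m}. sum_list (map (\<lambda>r. phipow phi (int j) r) (u j)))"
      by (simp add: interv_sum_list_conv_sum_set_nat)
    also have "\<dots> = (\<Sum>j\<in>{0..<m}. sum_list (map F' (filter (\<lambda>p. key p = j) L)))"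
      by (simp add: fu)
    also have "\<dots> = sum_list (map F' L)" using regroup[OF keyS, of F'] by simp
    finally show ?thesis .
  qed
  define D where "D = {k - phipow phi (int m) k | k. True}"
  have Dadd: "a \<in> D \<Longrightarrow> b \<in> D \<Longrightarrow> a + b \<in> D" for a b
  proof -
    assume "a \<in> D" "b \<in> D"
    then obtain k1 k2 where "a = k1 - phipow phi (int m) k1" "b = k2 - phipow phi (int m) k2" unfolding D_def by blast
    then show "a + b \<in> D" unfolding D_def by (rule_tac CollectI, rule_tac x="k1 + k2" in exI) (simp add: pp_add)
  qed
  have D0: "0 \<in> D" unfolding D_def by (rule CollectI, rule_tac x=0 in exI) (simp add: pp_0)
  have shift: "F' p - F p \<in> D" for p
  proof -
    have "int (key p) = fst p mod int m" unfolding key_def using m(1) by simp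
    then show ?thesis using shiftD[of "fst p" m "snd p"] unfolding F'_def F_def D_def by auto
  qed
  have sumD: "sum_list (map (\<lambda>p. F' p - F p) xs) \<in> D" for xs
    by (induction xs) (auto simp: D0 Dadd shift)
  then obtain k where k: "fst (evalw phi w') - fst g = k - phipow phi (int m) k"
    using x x' sum_list_subtractf[of "\<lambda>p. F' p" "\<lambda>p. F p" L] sumD[of L] unfolding D_def by auto
  have hw': "snd (evalw phi w') = int m" using hgt_eval cw unfolding w'_def by simp
  have ew': "evalw phi w' = gmul phi (gmul phi (k, 0) g) (ginv phi (k, 0))"
  proof -
    have "g = (fst g, int m)" using m(2) by (metis prod.collapse)
    then have "gmul phi (gmul phi (k, 0) g) (ginv phi (k, 0)) = (k + fst g - phipow phi (int m) k, int m)"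
      using conj_formula[of "(k,0)" "fst g" "int m"] by simp
    then show ?thesis using k hw' by (metis add.commute diff_add_cancel add_diff_eq prod.collapse eq_diff_eq)
  qed
  have lenu: "sum_list (map (\<lambda>j. length (u j)) [0..<m]) = length L"
  proof -
    have "sum_list (map (\<lambda>j. length (u j)) [0..<m]) = (\<Sum>j\<in>{0..<m}. sum_list (map (\<lambda>_. 1::nat) (filter (\<lambda>p. key p = j) L)))"
      unfolding interv_sum_list_conv_sum_set_nat u_def sl_one by simp
    also have "\<dots> = sum_list (map (\<lambda>_. 1::nat) L)" using regroup[OF keyS, of "\<lambda>_. 1::nat"] by simp
    finally show ?thesis unfolding sl_one .
  qed
  have lw': "length w' = length L + m" using cw lenu unfolding w'_def by simp
  have sw': "set w' \<subseteq> Sset R" using LR unfolding w'_def u_def Sset_def by auto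
  have "wordlen phi R g \<le> wordlen phi R (evalw phi w')" using mc ew' unfolding min_conj_rep_def by metis
  also have "\<dots> \<le> length w'" using wl_le[OF sw'] .
  finally have le: "length w0 \<le> length L + m" using w0(2) lw' by simp
  have len0: "length w0 = length L + ups w0 + downs w0" using len_rl[of w0 0] unfolding L_def .
  have h0: "int (ups w0) - int (downs w0) = int m" using hgt_ud[of w0] hgt_eval[of w0] w0(3) m(2) by simp
  have dz: "downs w0 = 0" and um: "ups w0 = m" using le len0 h0 by auto
  have "Ti \<notin> set w0" using dz unfolding downs_def by (auto simp add: filter_empty_conv)
  then have "set w0 \<subseteq> Rg ` R \<union> {T}" using w0(1) unfolding Sset_def by auto
  then obtain us v where d: "length us = m" "\<forall>u\<in>set us. u \<in> WR R" "v \<in> WR R"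
    "w0 = concat (map (\<lambda>u. u @ [T]) us) @ v" using decomp um by metis
  then obtain u1 us' where us: "us = u1 # us'" using m(1) by (cases us) auto
  define X where "X = concat (map (\<lambda>u. u @ [T]) us)"
  define w where "w = concat (map (\<lambda>u. u @ [T]) ((v @ u1) # us'))"
  have wv: "w = v @ X" unfolding w_def X_def us by simp
  have rot: "rotate (length v) w = w0" unfolding wv X_def d(4) by (simp add: rotate_append)
  have sw: "set w \<subseteq> Sset R" using w0(1) unfolding wv d(4) X_def by auto
  have lw: "length w = length w0" unfolding wv d(4) X_def by simp
  have ew: "evalw phi w = gmul phi (gmul phi (evalw phi v) g) (ginv phi (evalw phi v))"
  proof -
    have "evalw phi w = gmul phi (evalw phi v) (evalw phi X)" unfolding wv eval_append ..
    also have "\<dots> = gmul phi (gmul phi (evalw phi v) (gmul phi (evalw phi X) (evalw phi v))) (ginv phi (evalw phi v))"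
      by (rule swap_conj)
    also have "gmul phi (evalw phi X) (evalw phi v) = g" using w0(3) unfolding d(4) X_def eval_append by simp
    finally show ?thesis by (simp add: gmul_assoc)
  qed
  have geo: "geodesic phi R w" using geod_of[OF mc _ sw ew] lw w0(2) by simp
  have WRs: "\<forall>u\<in>set ((v @ u1) # us'). u \<in> WR R" using d(2,3) us unfolding WR_def by auto
  have lus: "length ((v @ u1) # us') = m" using d(1) us by simp
  have tp: "tpow (int m - int (m - 1)) = ([T] :: 'k letter list)" using m(1) unfolding tpow_def by simp
  have "w \<in> Wprime phi R"
    unfolding Wprime_def
    apply (rule CollectI, rule conjI[OF geo])
    apply (rule_tac x=0 in exI, rule_tac x="m - 1" in exI, rule_tac x=m in exI, rule_tac x="(v @ u1) # us'" in exI)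
    using lus WRs m(1) tp joinT_T[of "(v @ u1) # us'"] unfolding w_def by simp
  then have "w \<in> Cm phi R m" unfolding Cm_def using lus WRs w_def by blast
  then show ?thesis using rot w0(3) by blast
qed

end

lemma walk:
  assumes "hgt w0 = 0" "s = Min ((\<lambda>i. hgt (take i w0)) ` {0..length w0})"
    "t = Max ((\<lambda>i. hgt (take i w0)) ` {0..length w0})"
  shows "int (ups w0) \<ge> t - s \<and> int (downs w0) \<ge> t - s"
proof -
  define n where "n = length w0"
  define H where "H = (\<lambda>i. hgt (take i w0))"
  define U where "U = (\<lambda>i. int (ups (take i w0)))"
  define Dn where "Dn = (\<lambda>i. int (downs (take i w0)))"
  have HUD: "H i = U i - Dn i" for i unfolding H_def U_def Dn_def using hgt_ud by blast
  have mono: "i \<le> j \<Longrightarrow> U i \<le> U j \<and> Dn i \<le> Dn j" for i j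
  proof -
    assume "i \<le> j"
    then have "take j w0 = take i w0 @ take (j - i) (drop i w0)" by (metis le_add_diff_inverse take_add)
    then show ?thesis unfolding U_def Dn_def by (metis downs_simps(2) ups_simps(2) le_add1 of_nat_le_iff)
  qed
  have fin: "finite (H ` {0..n})" by simp
  have ne: "H ` {0..n} \<noteq> {}" by simp
  have "s \<in> H ` {0..n}" using Min_in[OF fin ne] assms(2) unfolding H_def n_def by simp
  then obtain i1 where i1: "i1 \<le> n" "H i1 = s" by auto
  have "t \<in> H ` {0..n}" using Max_in[OF fin ne] assms(3) unfolding H_def n_def by simp
  then obtain i2 where i2: "i2 \<le> n" "H i2 = t" by auto
  have Hn: "H n = 0" "U n = int (ups w0)" "Dn n = int (downs w0)" using assms(1) unfolding H_def U_def Dn_def n_def by auto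
  have z: "U 0 = 0" "Dn 0 = 0" unfolding U_def Dn_def by auto
  have HUD1: "H i1 = U i1 - Dn i1" "H i2 = U i2 - Dn i2" "H n = U n - Dn n" using HUD by auto
  show ?thesis
  proof (cases "i1 \<le> i2")
    case True
    then have "U i1 \<le> U i2" "Dn i1 \<le> Dn i2" "U i2 \<le> U n" "Dn i2 \<le> Dn n" "0 \<le> U i1" "0 \<le> Dn i1"
      using mono i2(1) mono[of 0] z by auto
    then show ?thesis using HUD1 Hn i1 i2 by linarith
  next
    case False
    then have "U i2 \<le> U i1" "Dn i2 \<le> Dn i1" "U i1 \<le> U n" "Dn i1 \<le> Dn n" "0 \<le> U i2" "0 \<le> Dn i2"
      using mono i1(1) mono[of 0] z by auto
    then show ?thesis using HUD1 Hn i1 i2 by linarith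
  qed
qed

context autm begin

lemma parti:
  assumes gen: "\<forall>h. \<exists>w. set w \<subseteq> Sset R \<and> evalw phi w = h" and mc: "min_conj_rep phi R g"
    and m: "snd g = 0"
  shows "\<exists>w\<in>C0 phi R. \<exists>j. evalw phi (rotate j w) = g"
proof -
  obtain w0 where w0: "set w0 \<subseteq> Sset R" "length w0 = wordlen phi R g" "evalw phi w0 = g"
    using wl_ex[OF gen] by blast
  define Hs where "Hs = (\<lambda>i. hgt (take i w0)) ` {0..length w0}"
  define s where "s = Min Hs"
  define t where "t = Max Hs"
  define d where "d = nat (t - s)"
  have fin: "finite Hs" unfolding Hs_def by simp
  have H0: "0 \<in> Hs" unfolding Hs_def by (rule image_eqI[of _ _ 0]) auto
  have s0: "s \<le> 0" unfolding s_def using Min_le[OF fin H0] .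
  have t0: "0 \<le> t" unfolding t_def using Max_ge[OF fin H0] .
  have hw0: "hgt w0 = 0" using hgt_eval[of w0] w0(3) m by simp
  have wk: "int (ups w0) \<ge> t - s \<and> int (downs w0) \<ge> t - s" using walk[OF hw0] unfolding s_def t_def Hs_def by blast
  define L where "L = rl 0 w0"
  define F where "F = (\<lambda>p::int\<times>'k. phipow phi (fst p) (snd p))"
  define key where "key = (\<lambda>p::int\<times>'k. nat (fst p - s))"
  define u where "u = (\<lambda>j. map snd (filter (\<lambda>p. key p = j) L))"
  define c where "c = nat (- s)"
  have cd: "c \<le> d" unfolding c_def d_def using t0 by simp
  have LR: "\<forall>p\<in>set L. snd p \<in> R"
  proof
    fix p assume "p \<in> set L"
    then have "Rg (snd p) \<in> set w0" using rl_mem[of "fst p" "snd p" 0 w0] unfolding L_def by auto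
    then show "snd p \<in> R" using w0(1) unfolding Sset_def by auto
  qed
  have Lh: "\<forall>p\<in>set L. s \<le> fst p \<and> fst p \<le> t"
  proof
    fix p assume "p \<in> set L"
    then obtain i where "i \<le> length w0" "fst p = hgt (take i w0)"
      using rl_mem[of "fst p" "snd p" 0 w0] unfolding L_def by auto
    then have "fst p \<in> Hs" unfolding Hs_def by auto
    then show "s \<le> fst p \<and> fst p \<le> t" unfolding s_def t_def using fin by auto
  qed
  have keyS: "\<forall>p\<in>set L. key p \<in> {0..<Suc d}" using Lh unfolding key_def d_def by auto
  have x: "fst g = sum_list (map F L)" using eval_x[of w0] w0(3) unfolding L_def F_def by simp
  have fu: "\<forall>p\<in>set xs. s \<le> fst p \<Longrightarrow> map F (filter (\<lambda>p. key p = j) xs) = map (\<lambda>r. phipow phi (s + int j) r) (map snd (filter (\<lambda>p. key p = j) xs))" for j xs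
    unfolding F_def key_def by (induction xs) auto
  define P where "P = concat (map (\<lambda>j. map Rg (u j) @ [T]) [0..<d])"
  define A where "A = concat (map (\<lambda>j. map Rg (u j) @ [T]) [0..<c])"
  define B where "B = concat (map (\<lambda>j. map Rg (u j) @ [T]) [c..<d]) @ map Rg (u d) @ replicate d Ti"
  define w' where "w' = P @ map Rg (u d) @ replicate d Ti"
  have ud: "[0..<d] = [0..<c] @ [c..<d]" using upt_add_eq_append[of 0 c "d - c"] cd by simp
  have wAB: "w' = A @ B" unfolding w'_def A_def B_def P_def ud by simp
  note cP = conc[of s u d]
  note cA = conc[of 0 u c]
  have rlw: "rl s w' = concat (map (\<lambda>j. map (\<lambda>r. (s + int j, r)) (u j)) [0..<Suc d])"
    using cP unfolding w'_def P_def by (simp add: rl_append rl_map rl_rep)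
  have hw': "hgt w' = 0" using cP unfolding w'_def P_def by simp
  have x': "phipow phi s (fst (evalw phi w')) = fst g"
  proof -
    have "phipow phi s (fst (evalw phi w')) = sum_list (map F (rl s w'))" using eval_rl[of s w'] unfolding F_def
      by (simp add: split_def)
    also have "\<dots> = sum_list (map (\<lambda>j. sum_list (map (\<lambda>r. phipow phi (s + int j) r) (u j))) [0..<Suc d])"
      unfolding rlw sl_concat by (simp add: F_def o_def)
    also have "\<dots> = (\<Sum>j\<in>{0..<Suc d}. sum_list (map (\<lambda>r. phipow phi (s + int j) r) (u j)))"
      by (simp only: interv_sum_list_conv_sum_set_nat set_upt)
    also have "\<dots> = (\<Sum>j\<in>{0..<Suc d}. sum_list (map F (filter (\<lambda>p. key p = j) L)))"
    proof -
      have fuL: "map F (filter (\<lambda>p. key p = j) L) = map (\<lambda>r. phipow phi (s + int j) r) (u j)" for j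
        using fu[of L j] Lh unfolding u_def by simp
      show ?thesis by (simp only: fuL)
    qed
    also have "\<dots> = sum_list (map F L)" using regroup[OF keyS, of F] by simp
    finally show ?thesis using x by simp
  qed
  have ew': "evalw phi w' = gmul phi (gmul phi (0, - s) g) (ginv phi (0, - s))"
  proof -
    have "g = (fst g, 0)" using m by (metis prod.collapse)
    then have "gmul phi (gmul phi (0, - s) g) (ginv phi (0, - s)) = (phipow phi (- s) (fst g), 0)"
      using conj_formula[of "(0, - s)" "fst g" 0] by (simp add: pp_0)
    also have "phipow phi (- s) (fst g) = fst (evalw phi w')" unfolding x'[symmetric] by (rule pp_inv2)
    also have "(fst (evalw phi w'), 0) = evalw phi w'" using hw' hgt_eval[of w'] by (simp add: prod_eq_iff)
    finally show ?thesis by simp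
  qed
  have lenu: "sum_list (map (\<lambda>j. length (u j)) [0..<Suc d]) = length L"
  proof -
    have "sum_list (map (\<lambda>j. length (u j)) [0..<Suc d]) = (\<Sum>j\<in>{0..<Suc d}. sum_list (map (\<lambda>_. 1::nat) (filter (\<lambda>p. key p = j) L)))"
      unfolding interv_sum_list_conv_sum_set_nat u_def sl_one by simp
    also have "\<dots> = sum_list (map (\<lambda>_. 1::nat) L)" using regroup[OF keyS, of "\<lambda>_. 1::nat"] by simp
    finally show ?thesis unfolding sl_one .
  qed
  have lw': "length w' = length L + 2 * d" using cP lenu unfolding w'_def P_def by simp
  have sw': "set w' \<subseteq> Sset R" using LR unfolding w'_def P_def u_def Sset_def by auto
  have len0: "length w0 = length L + ups w0 + downs w0" using len_rl[of w0 0] unfolding L_def .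
  have "length w' \<le> wordlen phi R g" using lw' len0 w0(2) wk unfolding d_def by linarith
  then have geo: "geodesic phi R w'" using geod_of[OF mc _ sw' ew'] by simp
  have rot: "evalw phi (rotate (length A) w') = g"
  proof -
    have r: "rotate (length A) w' = B @ A" unfolding wAB by (rule rotate_append)
    have hA: "hgt A = int c" using cA unfolding A_def by simp
    have hB: "hgt B = s" using hw' hA unfolding wAB c_def using s0 by simp
    have "evalw phi (B @ A) = (phipow phi (snd (evalw phi B)) (fst (gmul phi (evalw phi A) (evalw phi B))), 0)"
      unfolding eval_append by (rule swap0) (use hw' hgt_eval wAB in simp)
    also have "\<dots> = (fst g, snd g)" using x' hB hgt_eval[of B] m unfolding wAB eval_append[symmetric] by simp
    also have "\<dots> = g" by simp
    finally show ?thesis using r by simp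
  qed
  define us where "us = map (\<lambda>j. map Rg (u j)) [0..<Suc d]"
  have lus: "length us = d + 1" unfolding us_def by simp
  have WRs: "\<forall>v\<in>set us. v \<in> WR R" using LR unfolding us_def u_def WR_def by auto
  have jw: "w' = joinT us @ replicate d Ti" unfolding us_def joinT_upt w'_def P_def by simp
  have tp: "tpow (int 0 - int d) = (replicate d Ti :: 'k letter list)" unfolding tpow_def by simp
  have "w' \<in> Wprime phi R"
    unfolding Wprime_def
    apply (rule CollectI, rule conjI[OF geo])
    apply (rule_tac x=0 in exI, rule_tac x="d" in exI, rule_tac x=0 in exI, rule_tac x="us" in exI)
    using lus WRs tp jw by simp
  then have "w' \<in> C0 phi R" unfolding C0_def using lus WRs jw by blast
  then show ?thesis using rot by blast
qed

end

theorem lemma2p2: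
  fixes phi :: "'k::ab_group_add \<Rightarrow> 'k" and R :: "'k set" and g :: "'k \<times> int"
  assumes "is_aut phi"
    and "finite R" and "\<forall>r\<in>R. - r \<in> R"
    and "\<forall>h. \<exists>w. set w \<subseteq> Sset R \<and> evalw phi w = h"
    and "min_conj_rep phi R g"
  shows "(snd g = 0 \<longrightarrow> (\<exists>w\<in>C0 phi R. \<exists>j. evalw phi (rotate j w) = g))
       \<and> (\<forall>m::nat. m > 0 \<and> snd g = int m \<longrightarrow> (\<exists>w\<in>Cm phi R m. \<exists>j. evalw phi (rotate j w) = g))"
proof -
  interpret autm phi using assms(1) by unfold_locales
  show ?thesis using parti[OF assms(4,5)] partii[OF assms(4,5)] by blast
qed

end
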